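(* (i) $\overline{\mathcal{M}\setminus\mathbb{R}}\cap\mathbb{R}\subset\mathcal{O}$; (ii) $\overline{\mathcal{N}\setminus\mathrm{Diag}(\mathbb{R})}\cap\mathrm{Diag}(\mathbb{R})\subset\mathrm{Diag}(\mathcal{O})$.
   Context: Let $\mathcal{B}=\{1+\sum_{n=1}^\infty a_n x^n : a_n\in\{-1,0,1\}\}$ (power series converging on the open unit disk $\mathbb{D}\subset\mathbb{C}$). Define $\mathcal{M}=\{z\in\mathbb{D}: \exists f\in\mathcal{B},\ f(z)=0\}$, $\mathcal{N}=\{(\gamma,\lambda)\in(-1,1)^2: \exists f\in\mathcal{B},\ f(\gamma)=f(\lambda)=0\}$, $\mathcal{O}=\{\lambda\in(-1,1): \exists f\in\mathcal{B},\ f(\lambda)=f'(\lambda)=0\}$. For $F\subset\mathbb{R}$, $\mathrm{Diag}(F)=\{(\lambda,\lambda):\lambda\in F\}$. Overlines denote closures (relative to $\mathbb{D}$, resp. $(-1,1)^2$). *)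

theory Defs
  imports "HOL-Analysis.Analysis"
begin

definition coeffsB :: "(nat \<Rightarrow> int) set" where
  "coeffsB = {a. a 0 = 1 \<and> (\<forall>n\<ge>1. a n \<in> {-1, 0, 1})}"

definition pser :: "(nat \<Rightarrow> int) \<Rightarrow> 'a::{real_normed_field,banach} \<Rightarrow> 'a" where
  "pser a x = (\<Sum>n. of_int (a n) * x ^ n)"

definition setM :: "complex set" where
  "setM = {z. norm z < 1 \<and> (\<exists>a\<in>coeffsB. pser a z = 0)}"

definition setN :: "(real \<times> real) set" where
  "setN = {(g, l). g \<in> {-1<..<1} \<and> l \<in> {-1<..<1} \<and>
                   (\<exists>a\<in>coeffsB. pser a g = 0 \<and> pser a l = 0)}"

definition setO :: "real set" where
  "setO = {l. l \<in> {-1<..<1} \<and>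
              (\<exists>a\<in>coeffsB. pser a l = 0 \<and> deriv (pser a) l = 0)}"

definition Diag :: "real set \<Rightarrow> (real \<times> real) set" where
  "Diag F = {(l, l) | l. l \<in> F}"

end

theory Submission imports Defs begin

definition hh :: "nat \<Rightarrow> 'a::{real_normed_field} \<Rightarrow> 'a \<Rightarrow> 'a" where
  "hh n u v = (\<Sum>i<n. v^(n - Suc i) * u^i)"

lemma coeffsB_bound: "a \<in> coeffsB \<Longrightarrow> norm (of_int (a n) :: 'a::real_normed_field) \<le> 1"
proof -
  assume "a \<in> coeffsB"
  then have "a n \<in> {-1,0,1}" unfolding coeffsB_def by (cases "n = 0") auto
  then show ?thesis by auto
qed

lemma hh_bound:
  fixes u v :: "'a::real_normed_field"
  assumes "norm u \<le> r" "norm v \<le> r"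
  shows "norm (hh n u v) \<le> real n * r^(n-1)"
proof -
  have r0: "0 \<le> r" using assms(1) norm_ge_zero order_trans by blast
  have "norm (hh n u v) \<le> (\<Sum>i<n. norm (v^(n - Suc i) * u^i))"
    unfolding hh_def by (rule norm_sum)
  also have "\<dots> \<le> (\<Sum>i<n. r^(n-1))"
  proof (rule sum_mono)
    fix i assume "i \<in> {..<n}"
    then have e: "n - Suc i + i = n - 1" by auto
    have "norm (v^(n - Suc i) * u^i) = norm v ^(n - Suc i) * norm u ^ i"
      by (simp add: norm_mult norm_power)
    also have "\<dots> \<le> r^(n - Suc i) * r^i"
      by (intro mult_mono power_mono assms) (auto simp: r0)
    also have "\<dots> = r^(n-1)" by (simp add: power_add[symmetric] e)
    finally show "norm (v^(n - Suc i) * u^i) \<le> r^(n-1)" .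
  qed
  finally show ?thesis by simp
qed

lemma hh_diag: "hh n x x = of_nat n * x^(n-1)"
proof -
  have "hh n x x = (\<Sum>i<n. x^(n-1))"
    unfolding hh_def by (intro sum.cong refl) (simp add: power_add[symmetric])
  then show ?thesis by simp
qed

lemma hh_eq: "(u - v) * hh n u v = u^n - v^n"
  unfolding hh_def by (simp add: power_diff_sumr2)

lemma summable_M:
  assumes "0 \<le> r" "r < 1"
  shows "summable (\<lambda>n. real n * r^(n-1))"
proof -
  have "summable (\<lambda>n. diffs (\<lambda>_. 1::real) n * r ^ n)"
    by (rule termdiff_converges[of r 1]) (use assms in auto)
  then have "summable (\<lambda>n. real (Suc n) * r^n)" by (simp add: diffs_def)
  then have "summable (\<lambda>n. real (Suc n) * r^(Suc n - 1))" by simp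
  then show ?thesis by (subst summable_Suc_iff[symmetric])
qed

lemma summable_pser:
  fixes z :: "'a::{real_normed_field,banach}"
  assumes "a \<in> coeffsB" "norm z < 1"
  shows "summable (\<lambda>n. of_int (a n) * z^n)"
proof (rule summable_comparison_test)
  show "\<exists>N. \<forall>n\<ge>N. norm (of_int (a n) * z ^ n) \<le> norm z ^ n"
    using coeffsB_bound[OF assms(1)]
    by (auto simp: norm_mult norm_power intro!: mult_left_le_one_le)
  show "summable (\<lambda>n. norm z ^ n)" using assms by simp
qed

lemma summable_hh:
  fixes u v :: "'a::{real_normed_field,banach}"
  assumes "a \<in> coeffsB" "norm u \<le> r" "norm v \<le> r" "r < 1"
  shows "summable (\<lambda>n. of_int (a n) * hh n u v)"
proof (rule summable_comparison_test)
  have r0: "0 \<le> r" using assms(2) norm_ge_zero order_trans by blast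
  show "\<exists>N. \<forall>n\<ge>N. norm (of_int (a n) * hh n u v) \<le> real n * r^(n-1)"
  proof (intro exI allI impI)
    fix n
    have "norm (of_int (a n) * hh n u v) \<le> 1 * (real n * r^(n-1))"
      unfolding norm_mult
      by (intro mult_mono coeffsB_bound[OF assms(1)] hh_bound assms) (use r0 in auto)
    then show "norm (of_int (a n) * hh n u v) \<le> real n * r^(n-1)" by simp
  qed
  show "summable (\<lambda>n. real n * r^(n-1))" using summable_M r0 assms by blast
qed

lemma D_zero:
  fixes u v :: "'a::{real_normed_field,banach}"
  assumes "a \<in> coeffsB" "norm u \<le> r" "norm v \<le> r" "r < 1" "u \<noteq> v"
    "pser a u = 0" "pser a v = 0"
  shows "(\<Sum>n. of_int (a n) * hh n u v) = 0"
proof -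
  have su: "summable (\<lambda>n. of_int (a n) * u^n)" "summable (\<lambda>n. of_int (a n) * v^n)"
    using assms by (auto intro!: summable_pser)
  have "(u - v) * (\<Sum>n. of_int (a n) * hh n u v) = (\<Sum>n. (u - v) * (of_int (a n) * hh n u v))"
    by (rule suminf_mult[symmetric]) (rule summable_hh[OF assms(1-4)])
  also have "\<dots> = (\<Sum>n. of_int (a n) * u^n - of_int (a n) * v^n)"
  proof (intro suminf_cong)
    fix n
    have "(u - v) * (of_int (a n) * hh n u v) = of_int (a n) * ((u - v) * hh n u v)" by (simp add: ac_simps)
    also have "\<dots> = of_int (a n) * (u^n - v^n)" by (simp only: hh_eq)
    also have "\<dots> = of_int (a n) * u^n - of_int (a n) * v^n" by (simp add: right_diff_distrib)
    finally show "(u - v) * (of_int (a n) * hh n u v) = of_int (a n) * u^n - of_int (a n) * v^n" .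
  qed
  also have "\<dots> = pser a u - pser a v"
    unfolding pser_def by (rule suminf_diff[symmetric]) (use su in auto)
  finally show ?thesis using assms by simp
qed


definition coeffsR :: "(nat \<Rightarrow> real) set" where
  "coeffsR = {a. a 0 = 1 \<and> (\<forall>n\<ge>1. a n \<in> {-1, 0, 1})}"

lemma compact_coeffsR: "compact coeffsR"
proof -
  define S where "S = (\<lambda>n::nat. if n = 0 then {1::real} else {-1,0,1})"
  have eq: "coeffsR = PiE UNIV S"
    unfolding coeffsR_def S_def PiE_UNIV_domain
  proof (safe, goal_cases)
    case (1 x n) then show ?case by (cases "n = 0") auto
  next
    case (2 x)
    have "x 0 \<in> (if (0::nat) = 0 then {1} else {-1,0,1})" using 2 by blast
    then show ?case by simp
  next
    case (3 x n)
    have "n \<noteq> 0" using 3 by auto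
    have "x n \<in> (if n = 0 then {1} else {-1,0,1})" using 3(1) by blast
    then have "x n \<in> {-1,0,1}" using \<open>n \<noteq> 0\<close> by simp
    then show ?case using 3 by blast
  qed
  have "compactin (product_topology (\<lambda>_. euclidean) UNIV) (PiE UNIV S)"
    unfolding compactin_PiE by (auto simp: S_def intro!: finite_imp_compact)
  then show ?thesis unfolding eq euclidean_product_topology by simp
qed

lemma coeffsR_of: "a \<in> coeffsB \<Longrightarrow> (\<lambda>n. real_of_int (a n)) \<in> coeffsR"
  unfolding coeffsB_def coeffsR_def by auto

lemma int_small: "real_of_int k \<in> {-1,0,1} \<Longrightarrow> k \<in> {-1,0,1}"
proof -
  assume h: "real_of_int k \<in> {-1,0,1}"
  have "real_of_int (-1) \<le> real_of_int k" "real_of_int k \<le> real_of_int 1" using h by auto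
  then have "-1 \<le> k" "k \<le> 1" by (simp_all only: of_int_le_iff)
  then show ?thesis by auto
qed

lemma coeffsR_to: "b \<in> coeffsR \<Longrightarrow> (\<lambda>n. \<lfloor>b n\<rfloor>) \<in> coeffsB \<and> (\<forall>n. real_of_int \<lfloor>b n\<rfloor> = b n)"
proof -
  assume b: "b \<in> coeffsR"
  have *: "b n \<in> {-1,0,1}" for n
    using b unfolding coeffsR_def by (cases "n = 0") auto
  have fl: "real_of_int \<lfloor>b n\<rfloor> = b n" for n
  proof -
    have "b n = -1 \<or> b n = 0 \<or> b n = 1" using *[of n] by auto
    then show ?thesis by (elim disjE) simp_all
  qed
  moreover have "(\<lambda>n. \<lfloor>b n\<rfloor>) \<in> coeffsB"
  proof -
    have "\<lfloor>b 0\<rfloor> = 1" using b unfolding coeffsR_def by simp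
    moreover have "\<lfloor>b n\<rfloor> \<in> {-1,0,1}" for n
    proof -
      have "real_of_int \<lfloor>b n\<rfloor> \<in> {-1,0,1}" unfolding fl by (rule *)
      then show ?thesis by (rule int_small)
    qed
    ultimately show ?thesis unfolding coeffsB_def by auto
  qed
  ultimately show ?thesis by blast
qed


lemma core:
  fixes z w :: "nat \<Rightarrow> 'a::{real_normed_field,banach}" and A :: "nat \<Rightarrow> nat \<Rightarrow> int"
  assumes A: "\<And>k. A k \<in> coeffsB" and ne: "\<And>k. z k \<noteq> w k"
    and pz: "\<And>k. pser (A k) (z k) = 0" and pw: "\<And>k. pser (A k) (w k) = 0"
    and zx: "z \<longlonglongrightarrow> x" and wx: "w \<longlonglongrightarrow> x" and x1: "norm x < 1"
  shows "\<exists>a\<in>coeffsB. pser a x = 0 \<and> (\<Sum>n. of_int (a n) * hh n x x) = 0"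
proof -
  define R where "R k = (\<lambda>n. real_of_int (A k n))" for k
  have "\<forall>k. R k \<in> coeffsR" unfolding R_def using coeffsR_of A by blast
  then obtain b \<sigma> where b: "b \<in> coeffsR" "strict_mono \<sigma>" "(R \<circ> \<sigma>) \<longlonglongrightarrow> b"
    using seq_compactE[OF compact_imp_seq_compact[OF compact_coeffsR]] by metis
  define a where "a n = \<lfloor>b n\<rfloor>" for n
  have aB: "a \<in> coeffsB" and ab: "\<And>n. real_of_int (a n) = b n"
    using coeffsR_to[OF b(1)] unfolding a_def by auto
  have coef: "(\<lambda>k. of_int (A (\<sigma> k) n) :: 'a) \<longlonglongrightarrow> of_int (a n)" for n
  proof -
    have ic: "isCont (\<lambda>f::nat\<Rightarrow>real. f n) b"
      using continuous_on_product_coordinates[of n] continuous_on_eq_continuous_at open_UNIV by blast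
    have "(\<lambda>k. (R \<circ> \<sigma>) k n) \<longlonglongrightarrow> b n"
      using isCont_tendsto_compose[OF ic b(3)] .
    then have "(\<lambda>k. of_real ((R \<circ> \<sigma>) k n) :: 'a) \<longlonglongrightarrow> of_real (b n)"
      by (rule tendsto_of_real)
    then show ?thesis unfolding R_def o_def ab[symmetric] of_real_of_int_eq .
  qed
  define r where "r = (1 + norm x) / 2"
  have r1: "r < 1" and xr: "norm x < r" and r0: "0 \<le> r" using x1 unfolding r_def by auto
  have zs: "(\<lambda>k. z (\<sigma> k)) \<longlonglongrightarrow> x" using LIMSEQ_subseq_LIMSEQ[OF zx b(2)] by (simp add: o_def)
  have ws: "(\<lambda>k. w (\<sigma> k)) \<longlonglongrightarrow> x" using LIMSEQ_subseq_LIMSEQ[OF wx b(2)] by (simp add: o_def)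
  have evz: "eventually (\<lambda>k. norm (z (\<sigma> k)) < r) sequentially"
    using order_tendstoD(2)[OF tendsto_norm[OF zs] xr] .
  have evw: "eventually (\<lambda>k. norm (w (\<sigma> k)) < r) sequentially"
    using order_tendstoD(2)[OF tendsto_norm[OF ws] xr] .
  have ev: "eventually (\<lambda>k. norm (z (\<sigma> k)) \<le> r \<and> norm (w (\<sigma> k)) \<le> r) sequentially"
    using evz evw by eventually_elim auto
  have cb: "norm (of_int (A k n) :: 'a) \<le> 1" for k n using coeffsB_bound[OF A] .
  have T1: "(\<lambda>k. \<Sum>n. of_int (A (\<sigma> k) n) * z (\<sigma> k) ^ n) \<longlonglongrightarrow> (\<Sum>n. of_int (a n) * x ^ n)"
  proof (rule conjunct2[OF conjunct2[OF tannerys_theorem[where M = "\<lambda>n. r ^ n"]]])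
    show "(\<lambda>k. of_int (A (\<sigma> k) n) * z (\<sigma> k) ^ n) \<longlonglongrightarrow> of_int (a n) * x ^ n" for n
      by (intro tendsto_mult tendsto_power coef zs)
    show "eventually (\<lambda>(n, k). norm (of_int (A (\<sigma> k) n) * z (\<sigma> k) ^ n :: 'a) \<le> r ^ n) (at_top \<times>\<^sub>F sequentially)"
      unfolding eventually_prod_filter
    proof (intro exI conjI allI impI)
      show "eventually (\<lambda>_. True) at_top" by simp
      show "eventually (\<lambda>k. norm (z (\<sigma> k)) \<le> r \<and> norm (w (\<sigma> k)) \<le> r) sequentially" by (rule ev)
      fix n k assume "norm (z (\<sigma> k)) \<le> r \<and> norm (w (\<sigma> k)) \<le> r"
      then have "norm (of_int (A (\<sigma> k) n) * z (\<sigma> k) ^ n :: 'a) \<le> 1 * r ^ n"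
        unfolding norm_mult norm_power by (intro mult_mono cb power_mono) auto
      then show "(\<lambda>(n, k). norm (of_int (A (\<sigma> k) n) * z (\<sigma> k) ^ n :: 'a) \<le> r ^ n) (n, k)" by simp
    qed
    show "summable (\<lambda>n. r ^ n)" using r0 r1 by simp
  qed simp
  have "pser a x = 0"
  proof -
    have "(\<lambda>k. 0::'a) \<longlonglongrightarrow> pser a x" using T1 pz unfolding pser_def by simp
    then show ?thesis using LIMSEQ_unique tendsto_const by metis
  qed
  have T2: "(\<lambda>k. \<Sum>n. of_int (A (\<sigma> k) n) * hh n (z (\<sigma> k)) (w (\<sigma> k))) \<longlonglongrightarrow> (\<Sum>n. of_int (a n) * hh n x x)"
  proof (rule conjunct2[OF conjunct2[OF tannerys_theorem[where M = "\<lambda>n. real n * r ^ (n - 1)"]]])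
    show "(\<lambda>k. of_int (A (\<sigma> k) n) * hh n (z (\<sigma> k)) (w (\<sigma> k))) \<longlonglongrightarrow> of_int (a n) * hh n x x" for n
      unfolding hh_def by (intro tendsto_mult tendsto_power tendsto_sum coef zs ws)
    show "eventually (\<lambda>(n, k). norm (of_int (A (\<sigma> k) n) * hh n (z (\<sigma> k)) (w (\<sigma> k)) :: 'a) \<le> real n * r ^ (n - 1)) (at_top \<times>\<^sub>F sequentially)"
      unfolding eventually_prod_filter
    proof (intro exI conjI allI impI)
      show "eventually (\<lambda>_. True) at_top" by simp
      show "eventually (\<lambda>k. norm (z (\<sigma> k)) \<le> r \<and> norm (w (\<sigma> k)) \<le> r) sequentially" by (rule ev)
      fix n k assume h: "norm (z (\<sigma> k)) \<le> r \<and> norm (w (\<sigma> k)) \<le> r"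
      then have "norm (of_int (A (\<sigma> k) n) * hh n (z (\<sigma> k)) (w (\<sigma> k)) :: 'a) \<le> 1 * (real n * r ^ (n - 1))"
        unfolding norm_mult by (intro mult_mono cb hh_bound) (use r0 in auto)
      then show "(\<lambda>(n, k). norm (of_int (A (\<sigma> k) n) * hh n (z (\<sigma> k)) (w (\<sigma> k)) :: 'a) \<le> real n * r ^ (n - 1)) (n, k)" by simp
    qed
    show "summable (\<lambda>n. real n * r ^ (n - 1))" using summable_M r0 r1 by blast
  qed simp
  have "eventually (\<lambda>k. (\<Sum>n. of_int (A (\<sigma> k) n) * hh n (z (\<sigma> k)) (w (\<sigma> k))) = (0::'a)) sequentially"
    using ev by eventually_elim (intro D_zero[OF A _ _ r1 ne pz pw], auto)
  then have "(\<lambda>k. 0::'a) \<longlonglongrightarrow> (\<Sum>n. of_int (a n) * hh n x x)"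
    using Lim_transform_eventually[OF T2] by (metis (mono_tags, lifting) eventually_mono)
  then have "(\<Sum>n. of_int (a n) * hh n x x) = 0" using LIMSEQ_unique tendsto_const by metis
  with \<open>pser a x = 0\<close> aB show ?thesis by blast
qed


lemma deriv_pser:
  fixes l :: real
  assumes a: "a \<in> coeffsB" and l1: "\<bar>l\<bar> < 1"
  shows "deriv (pser a) l = (\<Sum>n. of_int (a n) * hh n l l)"
proof -
  define c where "c n = real_of_int (a n)" for n
  define K where "K = (1 + \<bar>l\<bar>) / 2"
  have K1: "norm K < 1" and lK: "norm l < norm K" using l1 unfolding K_def by auto
  have eq: "pser a = (\<lambda>x. \<Sum>n. c n * x ^ n)" unfolding pser_def c_def by (rule ext) simp
  have "DERIV (\<lambda>x. \<Sum>n. c n * x ^ n) l :> (\<Sum>n. diffs c n * l ^ n)"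
    by (rule termdiffs_strong[OF _ lK]) (unfold c_def, rule summable_pser[OF a K1])
  then have d: "deriv (pser a) l = (\<Sum>n. diffs c n * l ^ n)" unfolding eq by (rule DERIV_imp_deriv)
  have "summable (\<lambda>n. diffs c n * l ^ n)"
    by (rule termdiff_converges[of l 1]) (use l1 in \<open>auto simp: c_def intro!: summable_pser[OF a]\<close>)
  from diffs_equiv[OF this] have "(\<lambda>n. of_nat n * c n * l ^ (n - Suc 0)) sums (\<Sum>n. diffs c n * l ^ n)" .
  moreover have "(\<lambda>n. of_nat n * c n * l ^ (n - Suc 0)) = (\<lambda>n. of_int (a n) * hh n l l)"
    by (rule ext) (simp add: hh_diag c_def)
  ultimately have "(\<lambda>n. of_int (a n) * hh n l l) sums (\<Sum>n. diffs c n * l ^ n)" by simp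
  then have "(\<Sum>n. diffs c n * l ^ n) = (\<Sum>n. of_int (a n) * hh n l l)" by (rule sums_unique)
  then show ?thesis using d by simp
qed

lemma partii:
  "closure (setN - Diag UNIV) \<inter> ({-1<..<1} \<times> {-1<..<1}) \<inter> Diag UNIV \<subseteq> Diag setO"
proof
  fix p assume p: "p \<in> closure (setN - Diag UNIV) \<inter> ({-1<..<1} \<times> {-1<..<1}) \<inter> Diag UNIV"
  then obtain l where pl: "p = (l, l)" and l1: "\<bar>l\<bar> < 1" unfolding Diag_def by auto
  have "p \<in> closure (setN - Diag UNIV)" using p by blast
  then have "\<exists>s. (\<forall>n. s n \<in> setN - Diag UNIV) \<and> s \<longlonglongrightarrow> p" by (simp only: closure_sequential)
  then obtain s where s0: "\<forall>n. s n \<in> setN - Diag UNIV" and sl: "s \<longlonglongrightarrow> p" by blast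
  have s: "s k \<in> setN - Diag UNIV" for k using s0 by blast
  have "\<forall>k. \<exists>A. A \<in> coeffsB \<and> pser A (fst (s k)) = (0::real) \<and> pser A (snd (s k)) = (0::real)"
  proof
    fix k
    from s[of k] show "\<exists>A. A \<in> coeffsB \<and> pser A (fst (s k)) = (0::real) \<and> pser A (snd (s k)) = (0::real)"
      unfolding setN_def by (cases "s k") auto
  qed
  then have "\<exists>A. \<forall>k. A k \<in> coeffsB \<and> pser (A k) (fst (s k)) = (0::real) \<and> pser (A k) (snd (s k)) = (0::real)"
    by (rule choice)
  then obtain A where A0: "\<forall>k. A k \<in> coeffsB \<and> pser (A k) (fst (s k)) = (0::real) \<and> pser (A k) (snd (s k)) = (0::real)"
    by blast
  have A: "\<And>k. A k \<in> coeffsB" "\<And>k. pser (A k) (fst (s k)) = (0::real)"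
    "\<And>k. pser (A k) (snd (s k)) = (0::real)" using A0 by auto
  have ne: "fst (s k) \<noteq> snd (s k)" for k
    using s[of k] unfolding Diag_def by (cases "s k") auto
  have t1: "(\<lambda>k. fst (s k)) \<longlonglongrightarrow> l" using tendsto_fst[OF sl] pl by simp
  have t2: "(\<lambda>k. snd (s k)) \<longlonglongrightarrow> l" using tendsto_snd[OF sl] pl by simp
  obtain a where a: "a \<in> coeffsB" "pser a l = 0" "(\<Sum>n. of_int (a n) * hh n l l) = (0::real)"
    using core[of A "\<lambda>k. fst (s k)" "\<lambda>k. snd (s k)" l, OF A(1) ne A(2) A(3) t1 t2] l1 by auto
  have "l \<in> setO" unfolding setO_def using a l1 deriv_pser[OF a(1) l1] by auto
  then show "p \<in> Diag setO" unfolding pl Diag_def by auto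
qed

lemma pser_cnj:
  assumes "a \<in> coeffsB" "norm z < 1"
  shows "pser a (cnj z) = cnj (pser a z)"
proof -
  have "(\<lambda>n. of_int (a n) * z ^ n) sums pser a z"
    unfolding pser_def using summable_pser[OF assms] by (rule summable_sums)
  then have "(\<lambda>n. cnj (of_int (a n) * z ^ n)) sums cnj (pser a z)" by (simp only: sums_cnj)
  then have "(\<lambda>n. of_int (a n) * cnj z ^ n) sums cnj (pser a z)" by simp
  then show ?thesis unfolding pser_def by (rule sums_unique[symmetric])
qed

lemma parti:
  "closure (setM - \<real>) \<inter> ball 0 1 \<inter> \<real> \<subseteq> complex_of_real ` setO"
proof
  fix z assume z: "z \<in> closure (setM - \<real>) \<inter> ball 0 1 \<inter> \<real>"
  then obtain l where zl: "z = complex_of_real l" by (auto elim: Reals_cases)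
  have l1: "\<bar>l\<bar> < 1" using z zl by auto
  have "z \<in> closure (setM - \<real>)" using z by blast
  then have "\<exists>s. (\<forall>n. s n \<in> setM - \<real>) \<and> s \<longlonglongrightarrow> z" by (simp only: closure_sequential)
  then obtain s where s0: "\<forall>n. s n \<in> setM - \<real>" and sl: "s \<longlonglongrightarrow> z" by blast
  have s: "s k \<in> setM - \<real>" for k using s0 by blast
  have "\<forall>k. \<exists>A. A \<in> coeffsB \<and> pser A (s k) = 0"
    using s unfolding setM_def by blast
  then have "\<exists>A. \<forall>k. A k \<in> coeffsB \<and> pser (A k) (s k) = 0" by (rule choice)
  then obtain A where A0: "\<forall>k. A k \<in> coeffsB \<and> pser (A k) (s k) = 0" by blast
  have A: "\<And>k. A k \<in> coeffsB" "\<And>k. pser (A k) (s k) = 0" using A0 by auto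
  have n1: "norm (s k) < 1" for k using s[of k] unfolding setM_def by auto
  have ne: "s k \<noteq> cnj (s k)" for k
  proof -
    have "s k \<notin> \<real>" using s[of k] by blast
    then have "cnj (s k) \<noteq> s k" by (simp add: Reals_cnj_iff)
    then show ?thesis by auto
  qed
  have pw: "pser (A k) (cnj (s k)) = 0" for k using pser_cnj[OF A(1) n1] A(2) by simp
  have t2: "(\<lambda>k. cnj (s k)) \<longlonglongrightarrow> z"
    using tendsto_cnj[OF sl] zl by simp
  obtain a where a: "a \<in> coeffsB" "pser a z = 0" "(\<Sum>n. of_int (a n) * hh n z z) = 0"
    using core[of A s "\<lambda>k. cnj (s k)" z, OF A(1) ne A(2) pw sl t2] l1 zl by auto
  have "pser a z = complex_of_real (pser a l)"
    unfolding zl pser_def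
    by (subst suminf_of_real[OF summable_pser[OF a(1)]]) (use l1 in auto)
  then have p0: "pser a l = 0" using a(2) by simp
  have hz: "hh n z z = complex_of_real (hh n l l)" for n unfolding zl hh_diag by simp
  have "(\<Sum>n. of_int (a n) * hh n z z) = complex_of_real (\<Sum>n. of_int (a n) * hh n l l)"
    unfolding hz
    by (subst suminf_of_real[OF summable_hh[OF a(1), of l "\<bar>l\<bar>" l]]) (use l1 in auto)
  then have d0: "(\<Sum>n. of_int (a n) * hh n l l) = (0::real)" using a(3) by simp
  have "l \<in> setO" unfolding setO_def using a(1) p0 d0 l1 deriv_pser[OF a(1) l1] by auto
  then show "z \<in> complex_of_real ` setO" using zl by blast
qed

theorem lemma2p8:
  shows "(closure (setM - \<real>) \<inter> ball 0 1 \<inter> \<real> \<subseteq> complex_of_real ` setO)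
         \<and> (closure (setN - Diag UNIV) \<inter> ({-1<..<1} \<times> {-1<..<1}) \<inter> Diag UNIV \<subseteq> Diag setO)"
  by (rule conjI[OF parti partii])

end
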